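(* Fix a token $\texttt{<x>}\in\mathsf{Voc}$, an integer $\ell\ge0$, a length $T\ge1$ with $M\ge T$, and $\varepsilon\in(0,1)$. There exist matrices $\mathbf{K},\mathbf{Q}\in\mathbb{R}^{d\times d}$ such that for every sequence $(\mathbf{h}_1,\dots,\mathbf{h}_T)$ with $\mathbf{h}_i=[\tilde{\mathbf{h}}_i^\top,1,0]^\top$ satisfying (i) $\tilde{\mathbf{h}}_i=\sum_{v\in\mathsf{Voc}}\lambda_{i,v}\tilde{\mathbf{u}}_v$ with $\lambda_{i,v}\ge0$ and $\sum_v\lambda_{i,v}^2=1$ for all $i$, (ii) $\langle\tilde{\mathbf{u}}_{\texttt{<x>}},\tilde{\mathbf{h}}_i\rangle\in\{0,1\}$ for all $i$, and (iii) $\langle\tilde{\mathbf{u}}_{\texttt{<x>}},\tilde{\mathbf{h}}_i\rangle=0$ for $i\le\ell$, it holds for every $i\in[T]$: if $\langle\tilde{\mathbf{h}}_i,\tilde{\mathbf{u}}_{\texttt{<x>}}\rangle=1$ then $s_{i,i-\ell}>1-\varepsilon$, and otherwise $s_{i,1}>1-\varepsilon$, where $s_{i,\cdot}=\mathsf{SoftMax}(\langle\mathbf{q}_i,\mathbf{k}_1\rangle,\dots,\langle\mathbf{q}_i,\mathbf{k}_i\rangle)$ with the rotary queries and keys $\mathbf{q}_j=\mathbf{R}^{(j)}\mathbf{Q}\mathbf{h}_j$, $\mathbf{k}_j=\mathbf{R}^{(j)}\mathbf{K}\mathbf{h}_j$.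
   Context: Vocabulary $\mathsf{Voc}=\{1,\dots,V\}$. Dimension $d=d_\mathsf{TE}+2$ with $d$ and $d_\mathsf{TE}$ even; vectors $\tilde{\mathbf{u}}_v\in\mathbb{R}^{d_\mathsf{TE}}$, $v\in\mathsf{Voc}$, are orthonormal, and token embeddings are $\mathbf{u}_v=[\tilde{\mathbf{u}}_v^\top,0,0]^\top$. Rotary position embedding: $M>0$ is a fixed large integer, $\omega=M^{-2/d}$; for integer $i$ and $k\in\{1,\dots,d/2\}$, $\mathbf{R}^{(i,k)}=\begin{bmatrix}\cos(i\omega^k)&-\sin(i\omega^k)\\ \sin(i\omega^k)&\cos(i\omega^k)\end{bmatrix}$ and $\mathbf{R}^{(i)}=\mathrm{diag}(\mathbf{R}^{(i,1)},\dots,\mathbf{R}^{(i,d/2)})\in\mathbb{R}^{d\times d}$. $\mathsf{SoftMax}(\boldsymbol{x})_j=e^{x_j}/\sum_k e^{x_k}$. *)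

theory Defs
  imports Complex_Main
begin

text \<open>Vectors in R^n are represented as functions nat => real, with coordinates 0..n-1
  (0-based); matrices in R^(n x n) as nat => nat => real with entries (a,b), a,b < n.\<close>

definition vinner :: "nat \<Rightarrow> (nat \<Rightarrow> real) \<Rightarrow> (nat \<Rightarrow> real) \<Rightarrow> real" where
  "vinner n x y = (\<Sum>j<n. x j * y j)"

definition matvec :: "nat \<Rightarrow> (nat \<Rightarrow> nat \<Rightarrow> real) \<Rightarrow> (nat \<Rightarrow> real) \<Rightarrow> (nat \<Rightarrow> real)" where
  "matvec n A x = (\<lambda>a. \<Sum>b<n. A a b * x b)"

definition rope_omega :: "nat \<Rightarrow> nat \<Rightarrow> real" where
  "rope_omega M d = real M powr (- 2 / real d)"

text \<open>Rotary matrix R^(i) = diag(R^(i,1),...,R^(i,d/2)); the k-th 2x2 block (k = 1..d/2)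
  occupies 0-based coordinates 2k-2, 2k-1 and has angle i * omega^k.\<close>
definition rope_mat :: "nat \<Rightarrow> nat \<Rightarrow> int \<Rightarrow> nat \<Rightarrow> nat \<Rightarrow> real" where
  "rope_mat M d i a b =
     (if a < d \<and> b < d \<and> a div 2 = b div 2 then
        (let \<theta> = real_of_int i * rope_omega M d ^ (a div 2 + 1) in
         if even a \<and> even b then cos \<theta>
         else if even a \<and> odd b then - sin \<theta>
         else if odd a \<and> even b then sin \<theta>
         else cos \<theta>)
      else 0)"

definition hvec :: "nat \<Rightarrow> (nat \<Rightarrow> real) \<Rightarrow> (nat \<Rightarrow> real)" where
  "hvec dTE y = (\<lambda>j. if j < dTE then y j else if j = dTE then 1 else 0)"

definition softmax :: "nat \<Rightarrow> (nat \<Rightarrow> real) \<Rightarrow> nat \<Rightarrow> real" where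
  "softmax n z j = exp (z j) / (\<Sum>m\<in>{1..n}. exp (z m))"

definition rope_score ::
  "nat \<Rightarrow> nat \<Rightarrow> (nat \<Rightarrow> nat \<Rightarrow> real) \<Rightarrow> (nat \<Rightarrow> nat \<Rightarrow> real) \<Rightarrow> (nat \<Rightarrow> nat \<Rightarrow> real)
    \<Rightarrow> nat \<Rightarrow> nat \<Rightarrow> real" where
  "rope_score M d K Q h i j =
     (let q = matvec d (rope_mat M d (int i)) (matvec d Q (h i));
          k = (\<lambda>m. matvec d (rope_mat M d (int m)) (matvec d K (h m)))
      in softmax i (\<lambda>m. vinner d q (k m)) j)"

end

theory Submission imports Defs "HOL-Analysis.Complex_Transcendental" begin

lemma sum_split2: "(\<Sum>b<n+2. g b) = (\<Sum>b<n. g b) + g n + (g (Suc n) :: real)"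
  by (simp add: numeral_2_eq_2)

lemma rope_apply:
  fixes M :: nat and i :: int and y :: "nat \<Rightarrow> real"
  assumes ev: "even n" and supp: "\<And>j. j \<noteq> n \<Longrightarrow> j \<noteq> Suc n \<Longrightarrow> y j = 0"
  defines "\<theta> \<equiv> real_of_int i * rope_omega M (n+2) ^ (n div 2 + 1)"
  shows "matvec (n+2) (rope_mat M (n+2) i) y = (\<lambda>a. if a = n then cos \<theta> * y n - sin \<theta> * y (Suc n)
     else if a = Suc n then sin \<theta> * y n + cos \<theta> * y (Suc n) else 0)"
proof (rule ext)
  fix a
  have z: "(\<Sum>b<n. rope_mat M (n+2) i a b * y b) = 0" using supp by (intro sum.neutral) auto
  have s: "matvec (n+2) (rope_mat M (n+2) i) y a = rope_mat M (n+2) i a n * y n + rope_mat M (n+2) i a (Suc n) * y (Suc n)"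
    unfolding matvec_def using sum_split2[of "\<lambda>b. rope_mat M (n+2) i a b * y b" n] z by simp
  have d1: "Suc n div 2 = n div 2" using ev by presburger
  show "matvec (n+2) (rope_mat M (n+2) i) y a = (if a = n then cos \<theta> * y n - sin \<theta> * y (Suc n)
     else if a = Suc n then sin \<theta> * y n + cos \<theta> * y (Suc n) else 0)"
  proof (cases "a = n")
    case True
    have "rope_mat M (n+2) i a n = cos \<theta>" "rope_mat M (n+2) i a (Suc n) = - sin \<theta>"
      unfolding rope_mat_def Let_def \<theta>_def using ev d1 True by auto
    then show ?thesis using s True by simp
  next
    case F: False
    show ?thesis
    proof (cases "a = Suc n")
      case True
      have "rope_mat M (n+2) i a n = sin \<theta>" "rope_mat M (n+2) i a (Suc n) = cos \<theta>"
        unfolding rope_mat_def Let_def \<theta>_def using ev d1 True by auto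
      then show ?thesis using s True by simp
    next
      case False
      have "a div 2 \<noteq> n div 2" if "a < n + 2" using that F False ev by presburger
      then have "rope_mat M (n+2) i a n = 0" "rope_mat M (n+2) i a (Suc n) = 0"
        unfolding rope_mat_def using d1 by auto
      then show ?thesis using s F False by simp
    qed
  qed
qed

lemma vinner_supp:
  assumes "\<And>j. j \<noteq> n \<Longrightarrow> j \<noteq> Suc n \<Longrightarrow> q j = 0"
  shows "vinner (n+2) q k = q n * k n + q (Suc n) * k (Suc n)"
proof -
  have "(\<Sum>b<n. q b * k b) = 0" using assms by (intro sum.neutral) auto
  then show ?thesis unfolding vinner_def using sum_split2[of "\<lambda>b. q b * k b" n] by simp
qed

lemma softmax_big:
  assumes t: "t \<in> {1..n}" and nT: "n \<le> T" and gap: "\<And>m. m \<in> {1..n} \<Longrightarrow> m \<noteq> t \<Longrightarrow> z m \<le> z t - c"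
    and small: "real T * exp (- c) \<le> \<epsilon>" and e: "0 < \<epsilon>" "\<epsilon> < 1"
  shows "softmax n z t > 1 - \<epsilon>"
proof -
  define \<eta> where "\<eta> = real (n - 1) * exp (- c)"
  have cardn: "card ({1..n} - {t}) = n - 1" using t by simp
  have "(\<Sum>m\<in>{1..n}-{t}. exp (z m)) \<le> (\<Sum>m\<in>{1..n}-{t}. exp (z t) * exp (-c))"
  proof (rule sum_mono)
    fix m assume "m \<in> {1..n} - {t}"
    then have "z m \<le> z t + (-c)" using gap by auto
    then show "exp (z m) \<le> exp (z t) * exp (-c)" by (simp add: exp_add[symmetric])
  qed
  also have "\<dots> = exp (z t) * \<eta>" using cardn unfolding \<eta>_def by simp
  finally have le: "(\<Sum>m\<in>{1..n}-{t}. exp (z m)) \<le> exp (z t) * \<eta>" .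
  have S: "(\<Sum>m\<in>{1..n}. exp (z m)) = exp (z t) + (\<Sum>m\<in>{1..n}-{t}. exp (z m))"
    using t by (simp add: sum.remove)
  have eta0: "0 \<le> \<eta>" unfolding \<eta>_def by simp
  have "real (n - 1) < real T" using nT t by auto
  then have "\<eta> < real T * exp (-c)" unfolding \<eta>_def by (intro mult_strict_right_mono) auto
  then have eta: "\<eta> < \<epsilon>" using small by linarith
  have Spos: "0 < (\<Sum>m\<in>{1..n}. exp (z m))" using S t
    by (metis add_pos_nonneg exp_gt_zero exp_ge_zero sum_nonneg)
  have Sle: "(\<Sum>m\<in>{1..n}. exp (z m)) \<le> exp (z t) * (1 + \<eta>)" using S le by (simp add: algebra_simps)
  have "(1 - \<epsilon>) * (\<Sum>m\<in>{1..n}. exp (z m)) \<le> (1 - \<epsilon>) * (exp (z t) * (1 + \<eta>))"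
    using Sle e by (intro mult_left_mono) auto
  also have "\<dots> < exp (z t)"
  proof -
    have "0 \<le> \<epsilon> * \<eta>" using e eta0 by simp
    moreover have "(1 - \<epsilon>) * (1 + \<eta>) = 1 + \<eta> - \<epsilon> - \<epsilon> * \<eta>" by (simp add: algebra_simps)
    ultimately have "(1 - \<epsilon>) * (1 + \<eta>) < 1" using eta by linarith
    then show ?thesis by (simp add: mult.commute mult.left_commute)
  qed
  finally show ?thesis unfolding softmax_def using Spos by (simp add: field_simps)
qed

lemma rot_inner:
  fixes M i m :: nat and qv kv :: "nat \<Rightarrow> real"
  assumes ev: "even n"
    and sq: "\<And>j. j \<noteq> n \<Longrightarrow> j \<noteq> Suc n \<Longrightarrow> qv j = 0"
    and sk: "\<And>j. j \<noteq> n \<Longrightarrow> kv j = 0"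
  defines "F \<equiv> rope_omega M (n+2) ^ (n div 2 + 1)"
  shows "vinner (n+2) (matvec (n+2) (rope_mat M (n+2) (int i)) qv) (matvec (n+2) (rope_mat M (n+2) (int m)) kv)
    = kv n * (qv n * cos ((real i - real m) * F) - qv (Suc n) * sin ((real i - real m) * F))"
proof -
  have sk': "\<And>j. j \<noteq> n \<Longrightarrow> j \<noteq> Suc n \<Longrightarrow> kv j = 0" using sk by auto
  have k0: "kv (Suc n) = 0" using sk by simp
  note A = rope_apply[OF ev sq, where M=M and i="int i"] rope_apply[OF ev sk', where M=M and i="int m"]
  have "vinner (n+2) (matvec (n+2) (rope_mat M (n+2) (int i)) qv) (matvec (n+2) (rope_mat M (n+2) (int m)) kv)
     = (cos (real i * F) * qv n - sin (real i * F) * qv (Suc n)) * (cos (real m * F) * kv n)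
      + (sin (real i * F) * qv n + cos (real i * F) * qv (Suc n)) * (sin (real m * F) * kv n)"
    apply (subst vinner_supp)
    using A[THEN fun_cong] by (auto simp: k0 F_def simp del: of_nat_add)
  also have "\<dots> = kv n * (qv n * cos (real i * F - real m * F) - qv (Suc n) * sin (real i * F - real m * F))"
    unfolding cos_diff sin_diff by (simp add: algebra_simps)
  finally show ?thesis by (simp add: left_diff_distrib)
qed

lemma freq:
  assumes "M > 0" and that: "even n"
  shows "rope_omega M (n+2) ^ (n div 2 + 1) = 1 / real M"
proof -
  have "rope_omega M (n+2) ^ (n div 2 + 1) = real M powr (- 2 / real (n+2) * real (n div 2 + 1))"
    unfolding rope_omega_def using assms
    by (subst powr_realpow[symmetric]) (auto simp: powr_powr simp del: of_nat_add)
  also have "- 2 / real (n+2) * real (n div 2 + 1) = -1"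
  proof -
    have "real (n div 2 + 1) = real (n+2) / 2" using that by (auto elim!: evenE)
    then show ?thesis by simp
  qed
  finally show ?thesis using assms by (simp add: powr_neg_one)
qed

theorem lemma6:
  fixes V dTE M T l x :: nat
    and u :: "nat \<Rightarrow> nat \<Rightarrow> real"
    and \<epsilon> :: real
  assumes "even dTE"
    and orthonormal: "\<forall>v\<in>{1..V}. \<forall>w\<in>{1..V}. vinner dTE (u v) (u w) = (if v = w then 1 else 0)"
    and "M > 0"
    and "x \<in> {1..V}"
    and "T \<ge> 1" and "M \<ge> T"
    and "0 < \<epsilon>" and "\<epsilon> < 1"
  shows "\<exists>K Q :: nat \<Rightarrow> nat \<Rightarrow> real.
    \<forall>ht :: nat \<Rightarrow> nat \<Rightarrow> real.
      ((\<exists>lam :: nat \<Rightarrow> nat \<Rightarrow> real. \<forall>i\<in>{1..T}.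
          (\<forall>v\<in>{1..V}. lam i v \<ge> 0) \<and> (\<Sum>v\<in>{1..V}. (lam i v)\<^sup>2) = 1 \<and>
          (\<forall>j<dTE. ht i j = (\<Sum>v\<in>{1..V}. lam i v * u v j)))
       \<and> (\<forall>i\<in>{1..T}. vinner dTE (u x) (ht i) \<in> {0, 1})
       \<and> (\<forall>i\<in>{1..T}. i \<le> l \<longrightarrow> vinner dTE (u x) (ht i) = 0))
      \<longrightarrow> (\<forall>i\<in>{1..T}.
            (vinner dTE (ht i) (u x) = 1 \<longrightarrow>
               rope_score M (dTE + 2) K Q (\<lambda>m. hvec dTE (ht m)) i (i - l) > 1 - \<epsilon>) \<and>
            (vinner dTE (ht i) (u x) \<noteq> 1 \<longrightarrow>
               rope_score M (dTE + 2) K Q (\<lambda>m. hvec dTE (ht m)) i 1 > 1 - \<epsilon>))"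
proof -
  let ?d = "dTE + 2"
  define f where "f = rope_omega M ?d ^ (dTE div 2 + 1)"
  have f: "f = 1 / real M" unfolding f_def using freq assms(1,3) by blast
  have fpos: "f > 0" using f assms(3) by simp
  have TM: "real T \<le> real M" using assms(6) by simp
  have Tf: "real T * f \<le> 1" unfolding f using assms(3) TM by simp
  have pi3: "3 < pi" by (rule pi_gt3)
  define cl where "cl = cos (real l * f)"
  define sl where "sl = sin (real l * f)"
  define g0 where "g0 = 2 * sin (f/2) * cos 1"
  define g1 where "g1 = 1 - cos f"
  define g where "g = min g0 g1"
  have f1: "f \<le> real T * f" using assms(5) fpos by (intro mult_right_mono[of 1 "real T" f, simplified]) auto
  have fle1: "f \<le> 1" using Tf f1 by linarith
  then have "f/2 < pi" using fle1 pi3 by linarith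
  then have "sin (f/2) > 0" using fpos by (intro sin_gt_zero) auto
  moreover have "cos (1::real) > 0" using pi3 by (intro cos_gt_zero_pi) linarith+
  ultimately have g0pos: "g0 > 0" unfolding g0_def by simp
  have "cos f < cos 0" using fle1 fpos pi3 by (intro cos_monotone_0_pi) auto
  then have g1pos: "g1 > 0" unfolding g1_def by simp
  have gpos: "g > 0" unfolding g_def using g0pos g1pos by simp
  define \<beta> where "\<beta> = (ln (real T) - ln \<epsilon> + 1) / g"
  have lnT: "ln (real T) \<ge> 0" using assms(5) by simp
  have lne: "ln \<epsilon> < 0" using assms(7,8) by simp
  have \<beta>g: "\<beta> * g = ln (real T) - ln \<epsilon> + 1" unfolding \<beta>_def using gpos by simp
  have \<beta>pos: "\<beta> > 0" unfolding \<beta>_def using gpos lnT lne by simp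
  have small: "real T * exp (- (\<beta> * g)) \<le> \<epsilon>"
  proof -
    have "exp (- (\<beta> * g)) = \<epsilon> / real T * exp (-1)"
      unfolding \<beta>g using assms(5,7)
      by (simp add: exp_diff exp_add exp_minus field_simps)
    moreover have "exp (-1::real) \<le> 1" by simp
    ultimately show ?thesis using assms(5,7) by (simp add: field_simps)
  qed
  define K :: "nat \<Rightarrow> nat \<Rightarrow> real" where "K = (\<lambda>a c. if a = dTE \<and> c = dTE then \<beta> else 0)"
  define Q :: "nat \<Rightarrow> nat \<Rightarrow> real" where "Q = (\<lambda>a c. if c < dTE then (if a = dTE then cl * u x c
     else if a = Suc dTE then (1 - sl) * u x c else 0) else if c = dTE \<and> a = Suc dTE then -1 else 0)"
  show ?thesis
  proof (rule exI[of _ K], rule exI[of _ Q], intro allI impI ballI)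
    fix ht :: "nat \<Rightarrow> nat \<Rightarrow> real" and i :: nat
    assume H: "(\<exists>lam :: nat \<Rightarrow> nat \<Rightarrow> real. \<forall>i\<in>{1..T}.
          (\<forall>v\<in>{1..V}. lam i v \<ge> 0) \<and> (\<Sum>v\<in>{1..V}. (lam i v)\<^sup>2) = 1 \<and>
          (\<forall>j<dTE. ht i j = (\<Sum>v\<in>{1..V}. lam i v * u v j)))
       \<and> (\<forall>i\<in>{1..T}. vinner dTE (u x) (ht i) \<in> {0, 1})
       \<and> (\<forall>i\<in>{1..T}. i \<le> l \<longrightarrow> vinner dTE (u x) (ht i) = 0)"
      and i: "i \<in> {1..T}"
    define B where "B = vinner dTE (u x) (ht i)"
    have Bsym: "vinner dTE (ht i) (u x) = B" unfolding B_def vinner_def by (simp add: mult.commute)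
    have B01: "B = 0 \<or> B = 1" using H i unfolding B_def by auto
    have Bl: "B = 1 \<Longrightarrow> l < i" using H i unfolding B_def by (metis not_le zero_neq_one)
    define h where "h = (\<lambda>m. hvec dTE (ht m))"
    have KH: "matvec ?d K (h m) = (\<lambda>a. if a = dTE then \<beta> else 0)" for m
    proof
      fix a
      have "(\<Sum>b<dTE. K a b * h m b) = 0" unfolding K_def by (intro sum.neutral) auto
      then show "matvec ?d K (h m) a = (if a = dTE then \<beta> else 0)"
        unfolding matvec_def sum_split2 by (simp add: K_def h_def hvec_def)
    qed
    have QH: "matvec ?d Q (h i) = (\<lambda>a. if a = dTE then cl * B else if a = Suc dTE then (1 - sl) * B - 1 else 0)"
    proof
      fix a
      have e1: "(\<Sum>b<dTE. Q a b * h i b) = (if a = dTE then cl * B else if a = Suc dTE then (1 - sl) * B else 0)"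
        unfolding B_def vinner_def Q_def h_def hvec_def
        by (auto simp: sum_distrib_left mult.assoc intro!: sum.cong)
      show "matvec ?d Q (h i) a = (if a = dTE then cl * B else if a = Suc dTE then (1 - sl) * B - 1 else 0)"
        unfolding matvec_def sum_split2 e1 by (simp add: Q_def h_def hvec_def)
    qed
    define z where "z = (\<lambda>m. \<beta> * (cl * B * cos ((real i - real m) * f) - ((1 - sl) * B - 1) * sin ((real i - real m) * f)))"
    have score: "rope_score M ?d K Q h i j = softmax i z j" for j
    proof -
      have "(\<lambda>m. vinner ?d (matvec ?d (rope_mat M ?d (int i)) (matvec ?d Q (h i)))
                 (matvec ?d (rope_mat M ?d (int m)) (matvec ?d K (h m)))) = z"
      proof
        fix m
        show "vinner ?d (matvec ?d (rope_mat M ?d (int i)) (matvec ?d Q (h i)))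
                 (matvec ?d (rope_mat M ?d (int m)) (matvec ?d K (h m))) = z m"
          apply (subst rot_inner[OF assms(1)])
          unfolding QH KH z_def f_def by auto
      qed
      then show ?thesis unfolding rope_score_def Let_def by simp
    qed
    have score': "rope_score M ?d K Q (\<lambda>m. hvec dTE (ht m)) i j = softmax i z j" for j
      using score[of j] unfolding h_def .
    show "(vinner dTE (ht i) (u x) = 1 \<longrightarrow>
               rope_score M (dTE + 2) K Q (\<lambda>m. hvec dTE (ht m)) i (i - l) > 1 - \<epsilon>) \<and>
            (vinner dTE (ht i) (u x) \<noteq> 1 \<longrightarrow>
               rope_score M (dTE + 2) K Q (\<lambda>m. hvec dTE (ht m)) i 1 > 1 - \<epsilon>)"
      unfolding Bsym score'
    proof (intro conjI impI)
      assume B1: "B = 1"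
      have li: "l < i" using Bl B1 .
      have zc: "z m = \<beta> * cos ((real i - real m - real l) * f)" for m
      proof -
        have e: "(real i - real m - real l) * f = (real i - real m) * f - real l * f"
          by (simp add: algebra_simps)
        have "cos ((real i - real m - real l) * f) = cos ((real i - real m) * f) * cos (real l * f)
            + sin ((real i - real m) * f) * sin (real l * f)"
          unfolding e by (rule cos_diff)
        then show ?thesis unfolding z_def B1 cl_def sl_def by (simp add: algebra_simps)
      qed
      show "softmax i z (i - l) > 1 - \<epsilon>"
      proof (rule softmax_big[where T=T and c="\<beta> * g"])
        show "i - l \<in> {1..i}" using li by auto
        show "i \<le> T" using i by auto
        fix m assume m: "m \<in> {1..i}" "m \<noteq> i - l"
        define k where "k = real i - real m - real l"
        have zt: "z (i - l) = \<beta>" unfolding zc using li by (simp add: of_nat_diff)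
        have k1: "\<bar>k\<bar> \<ge> 1" unfolding k_def using m li by (auto simp: abs_if)
        have k2: "\<bar>k\<bar> \<le> real T" unfolding k_def using m li i by (auto simp: abs_if)
        have "\<bar>k * f\<bar> \<le> real T * f" using k2 fpos by (simp add: abs_mult)
        then have kf: "\<bar>k * f\<bar> \<le> 1" using Tf by linarith
        have "f \<le> \<bar>k * f\<bar>" using k1 fpos by (simp add: abs_mult)
        then have "cos \<bar>k * f\<bar> \<le> cos f" using kf fpos pi3
          by (subst cos_mono_le_eq) auto
        then have "cos (k * f) \<le> cos f" by simp
        then have "z m \<le> \<beta> * cos f" unfolding zc k_def[symmetric] using \<beta>pos by simp
        also have "\<dots> = z (i - l) - \<beta> * g1" unfolding zt g1_def by (simp add: algebra_simps)
        also have "\<dots> \<le> z (i - l) - \<beta> * g" unfolding g_def using \<beta>pos by simp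
        finally show "z m \<le> z (i - l) - \<beta> * g" .
      qed (use small assms(7,8) in auto)
    next
      assume "B \<noteq> 1"
      then have B0: "B = 0" using B01 by simp
      have zs: "z m = \<beta> * sin ((real i - real m) * f)" for m
        unfolding z_def B0 by simp
      show "softmax i z 1 > 1 - \<epsilon>"
      proof (rule softmax_big[where T=T and c="\<beta> * g"])
        show "1 \<in> {1..i}" using i by auto
        show "i \<le> T" using i by auto
        fix m assume m: "m \<in> {1..i}" "m \<noteq> 1"
        define a where "a = (real m - 1) * f / 2"
        define b where "b = (2 * real i - 1 - real m) * f / 2"
        have "real i * f \<le> real T * f" using i fpos by (intro mult_right_mono) auto
        then have if1: "real i * f \<le> 1" using Tf by linarith
        have mi: "real m * f \<le> real i * f" using m fpos by (intro mult_right_mono) auto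
        have m2: "2 * f \<le> real m * f" using m fpos by (intro mult_right_mono) auto
        have ae: "a = (real m * f - f) / 2" unfolding a_def by (simp add: algebra_simps)
        have be: "b = (2 * (real i * f) - f - real m * f) / 2" unfolding b_def by (simp add: algebra_simps)
        have gen: "\<And>X Y. X \<le> 1 \<Longrightarrow> Y \<le> X \<Longrightarrow> 2 * f \<le> Y \<Longrightarrow>
            f/2 \<le> (Y - f) / 2 \<and> (Y - f) / 2 \<le> 1/2 \<and> 0 \<le> (2 * X - f - Y) / 2 \<and> (2 * X - f - Y) / 2 \<le> 1"
          using fpos by (auto simp: field_simps)
        have "f/2 \<le> a \<and> a \<le> 1/2 \<and> 0 \<le> b \<and> b \<le> 1" unfolding ae be
          by (rule gen[OF if1 mi m2])
        then have ab: "f/2 \<le> a" "a \<le> 1/2" "0 \<le> b" "b \<le> 1" by auto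
        have diff: "z 1 - z m = \<beta> * (2 * sin a * cos b)"
          unfolding zs a_def b_def right_diff_distrib[symmetric] sin_diff_sin
          by (simp add: algebra_simps add_divide_distrib diff_divide_distrib)
        have s1: "sin (f/2) \<le> sin a" using ab pi3 fpos by (subst sin_mono_le_eq) auto
        have c1: "cos 1 \<le> cos b" using ab pi3 by (subst cos_mono_le_eq) auto
        have "g0 \<le> 2 * sin a * cos b" unfolding g0_def
          using s1 c1 \<open>sin (f/2) > 0\<close> \<open>cos 1 > 0\<close>
          by (simp add: mult_mono)
        then have "\<beta> * g \<le> \<beta> * (2 * sin a * cos b)" unfolding g_def using \<beta>pos
          by (meson min.cobounded1 order_trans mult_left_mono less_imp_le)
        then show "z m \<le> z 1 - \<beta> * g" using diff by linarith
      qed (use small assms(7,8) in auto)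
    qed
  qed
qed

end
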